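(* Let $\alpha,\beta$ be operator space tensor norms (on all normed operator spaces), let $E,F$ be normed operator spaces and $c\ge1$, and suppose $\alpha\le c\beta$ on $E\otimes N$ for cofinally many finite-dimensional subspaces $N\subseteq F$. If $F$ has the completely bounded approximation property with constant $C\ge1$, then $\alpha\le Cc\,\beta$ on $E\otimes F$.
   Context: An operator space tensor norm $\alpha$ assigns to every pair $(E,F)$ of normed operator spaces (not necessarily complete) an operator space structure $\alpha_n(\cdot;E,F)$ on $E\otimes F$, written $E\otimes_\alpha F$, such that the identities $E\otimes_{\mathrm{proj}}F\to E\otimes_\alpha F\to E\otimes_{\min}F$ are complete contractions and $\|S\otimes T:E_1\otimes_\alpha F_1\to E_2\otimes_\alpha F_2\|_{cb}\le\|S\|_{cb}\|T\|_{cb}$ for completely bounded $S,T$ (here $\min$ and $\mathrm{proj}$ are the operator space injective and projective tensor norms). "$\alpha\le c\beta$ on $E\otimes F$" means the identity $E\otimes_\beta F\to E\otimes_\alpha F$ has cb-norm at most $c$. "Cofinally many" means every finite-dimensional subspace of $F$ is contained in one of the subspaces $N$ for which the inequality holds. $F$ has the $C$-completely bounded approximation property if there is a net of finite-rank maps $T_\eta\in CB(F,F)$ with $\|T_\eta\|_{cb}\le C$ and $\|T_\eta x-x\|\to0$ for every $x\in F$. *)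

theory Defs
  imports Complex_Main "HOL-Library.Function_Algebras"
begin

class cvec = ab_group_add +
  fixes cscale :: "complex \<Rightarrow> 'a \<Rightarrow> 'a"
  assumes cscale_add_right: "cscale a (x + y) = cscale a x + cscale a y"
    and cscale_add_left: "cscale (a + b) x = cscale a x + cscale b x"
    and cscale_cscale: "cscale a (cscale b x) = cscale (a * b) x"
    and cscale_one: "cscale 1 x = x"

instantiation complex :: cvec
begin
definition cscale_complex :: "complex \<Rightarrow> complex \<Rightarrow> complex" where
  "cscale_complex a z = a * z"
instance by standard (auto simp: cscale_complex_def algebra_simps)
end

instantiation "fun" :: (type, cvec) cvec
begin
definition cscale_fun :: "complex \<Rightarrow> ('a \<Rightarrow> 'b) \<Rightarrow> 'a \<Rightarrow> 'b" where
  "cscale_fun a f = (\<lambda>x. cscale a (f x))"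
instance by standard (auto simp: fun_eq_iff cscale_fun_def cscale_add_right cscale_add_left cscale_cscale cscale_one)
end

definition csubspace :: "'a::cvec set \<Rightarrow> bool" where
  "csubspace E \<longleftrightarrow> 0 \<in> E \<and> (\<forall>x\<in>E. \<forall>y\<in>E. x + y \<in> E) \<and> (\<forall>c. \<forall>x\<in>E. cscale c x \<in> E)"

definition clinear_on :: "'a::cvec set \<Rightarrow> ('a \<Rightarrow> 'b::cvec) \<Rightarrow> bool" where
  "clinear_on E S \<longleftrightarrow> (\<forall>x\<in>E. \<forall>y\<in>E. S (x + y) = S x + S y) \<and> (\<forall>c. \<forall>x\<in>E. S (cscale c x) = cscale c (S x))"

definition clin :: "('a::cvec \<Rightarrow> complex) \<Rightarrow> bool" where
  "clin f \<longleftrightarrow> clinear_on UNIV f"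

definition cspan :: "'a::cvec set \<Rightarrow> 'a set" where
  "cspan B = {sum (\<lambda>b. cscale (k b) b) B' | k B'. finite B' \<and> B' \<subseteq> B}"

definition fin_dim :: "'a::cvec set \<Rightarrow> bool" where
  "fin_dim N \<longleftrightarrow> (\<exists>B. finite B \<and> N = cspan B)"

definition matrices :: "nat \<Rightarrow> nat \<Rightarrow> 'v::zero set \<Rightarrow> (nat \<Rightarrow> nat \<Rightarrow> 'v) set" where
  "matrices m n V = {X. (\<forall>i j. i < m \<and> j < n \<longrightarrow> X i j \<in> V) \<and> (\<forall>i j. \<not> (i < m \<and> j < n) \<longrightarrow> X i j = 0)}"

definition mnorm :: "nat \<Rightarrow> nat \<Rightarrow> (nat \<Rightarrow> nat \<Rightarrow> complex) \<Rightarrow> real" where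
  "mnorm m n a = Sup {cmod (\<Sum>i<m. \<Sum>j<n. cnj (\<eta> i) * a i j * \<xi> j) | \<xi> \<eta>.
       (\<Sum>j<n. (cmod (\<xi> j))\<^sup>2) \<le> 1 \<and> (\<Sum>i<m. (cmod (\<eta> i))\<^sup>2) \<le> 1}"

definition mmult3 :: "nat \<Rightarrow> nat \<Rightarrow> (nat \<Rightarrow> nat \<Rightarrow> complex) \<Rightarrow> (nat \<Rightarrow> nat \<Rightarrow> 'v::cvec)
    \<Rightarrow> (nat \<Rightarrow> nat \<Rightarrow> complex) \<Rightarrow> nat \<Rightarrow> nat \<Rightarrow> 'v" where
  "mmult3 m k a X b = (\<lambda>i j. if i < m \<and> j < m then
      (\<Sum>r<k. \<Sum>s<k. cscale (a i r * b s j) (X r s)) else 0)"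

definition dsum :: "nat \<Rightarrow> nat \<Rightarrow> (nat \<Rightarrow> nat \<Rightarrow> 'v::zero) \<Rightarrow> (nat \<Rightarrow> nat \<Rightarrow> 'v) \<Rightarrow> nat \<Rightarrow> nat \<Rightarrow> 'v" where
  "dsum m n X Y = (\<lambda>i j. if i < m \<and> j < m then X i j
      else if m \<le> i \<and> i < m + n \<and> m \<le> j \<and> j < m + n then Y (i - m) (j - m) else 0)"

definition zero_mat :: "nat \<Rightarrow> nat \<Rightarrow> 'v::zero" where "zero_mat = (\<lambda>i j. 0)"

definition mat1 :: "'v::zero \<Rightarrow> nat \<Rightarrow> nat \<Rightarrow> 'v" where
  "mat1 v = (\<lambda>i j. if i = 0 \<and> j = 0 then v else 0)"

text \<open>A (normed, not necessarily complete) operator space: a subspace of an ambient complex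
  vector space together with matrix norms nu n on M_n(E) satisfying Ruan's axioms.\<close>
type_synonym 'a opsp = "'a set \<times> (nat \<Rightarrow> (nat \<Rightarrow> nat \<Rightarrow> 'a) \<Rightarrow> real)"

definition opspace :: "'a::cvec opsp \<Rightarrow> bool" where
  "opspace E \<longleftrightarrow> (let V = fst E; \<nu> = snd E in
     csubspace V \<and>
     (\<forall>n. \<forall>X\<in>matrices n n V. \<nu> n X \<ge> 0 \<and> (\<nu> n X = 0 \<longleftrightarrow> X = zero_mat)) \<and>
     (\<forall>n. \<forall>X\<in>matrices n n V. \<forall>Y\<in>matrices n n V. \<nu> n (X + Y) \<le> \<nu> n X + \<nu> n Y) \<and>
     (\<forall>n c. \<forall>X\<in>matrices n n V. \<nu> n (cscale c X) = cmod c * \<nu> n X) \<and>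
     (\<forall>m n. \<forall>X\<in>matrices m m V. \<forall>Y\<in>matrices n n V. \<nu> (m + n) (dsum m n X Y) = max (\<nu> m X) (\<nu> n Y)) \<and>
     (\<forall>m k a b. \<forall>X\<in>matrices k k V. a \<in> matrices m k UNIV \<longrightarrow> b \<in> matrices k m UNIV \<longrightarrow>
        \<nu> m (mmult3 m k a X b) \<le> mnorm m k a * \<nu> k X * mnorm k m b))"

definition restr :: "'a opsp \<Rightarrow> 'a set \<Rightarrow> 'a opsp" where
  "restr F N = (N, snd F)"

definition cb_bounded :: "'a::cvec opsp \<Rightarrow> 'b::cvec opsp \<Rightarrow> ('a \<Rightarrow> 'b) \<Rightarrow> real \<Rightarrow> bool" where
  "cb_bounded E F S K \<longleftrightarrow> clinear_on (fst E) S \<and> S ` fst E \<subseteq> fst F \<and>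
     (\<forall>n. \<forall>X\<in>matrices n n (fst E). snd F n (\<lambda>i j. S (X i j)) \<le> K * snd E n X)"

text \<open>An elementary representation: the tensor sum_i x_i (x) y_i is identified with the
  bilinear form (f,g) |-> sum_i f x_i g y_i on pairs of linear functionals on the ambient
  spaces (this realises the algebraic tensor product, since algebraic duals separate points).\<close>
type_synonym ('a, 'b) tensor = "('a \<Rightarrow> complex) \<times> ('b \<Rightarrow> complex) \<Rightarrow> complex"

definition tsum :: "('a::cvec \<times> 'b::cvec) list \<Rightarrow> ('a, 'b) tensor" where
  "tsum xs = (\<lambda>(f, g). if clin f \<and> clin g then (\<Sum>(x, y)\<leftarrow>xs. f x * g y) else 0)"

definition tens :: "'a::cvec set \<Rightarrow> 'b::cvec set \<Rightarrow> ('a, 'b) tensor set" where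
  "tens E F = {tsum xs | xs. set xs \<subseteq> E \<times> F}"

definition tmap :: "'a::cvec set \<Rightarrow> 'b::cvec set \<Rightarrow> ('a \<Rightarrow> 'c::cvec) \<Rightarrow> ('b \<Rightarrow> 'd::cvec)
    \<Rightarrow> ('a, 'b) tensor \<Rightarrow> ('c, 'd) tensor" where
  "tmap E1 F1 S T u = (SOME v. \<exists>xs. set xs \<subseteq> E1 \<times> F1 \<and> u = tsum xs \<and>
                                 v = tsum (map (\<lambda>(x, y). (S x, T y)) xs))"

type_synonym ('a, 'b) tnorm = "'a opsp \<Rightarrow> 'b opsp \<Rightarrow> nat \<Rightarrow> (nat \<Rightarrow> nat \<Rightarrow> ('a, 'b) tensor) \<Rightarrow> real"

text \<open>Operator space injective (minimal) tensor norm: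
  ||U||_min = sup ||(phi (x) psi)_n (U)||_{M_{npq}} over complete contractions
  phi : E -> M_p, psi : F -> M_q; phi is given by its matrix of (ambient-extended) functionals.
  (phi_n X) has entry phi_{kl}(X_{ij}) at position (i*p+k, j*p+l).\<close>
definition compl_contr_mat :: "'a::cvec opsp \<Rightarrow> nat \<Rightarrow> (nat \<Rightarrow> nat \<Rightarrow> 'a \<Rightarrow> complex) \<Rightarrow> bool" where
  "compl_contr_mat E p \<phi> \<longleftrightarrow> (\<forall>k l. clin (\<phi> k l)) \<and> (\<forall>k l. \<not> (k < p \<and> l < p) \<longrightarrow> \<phi> k l = (\<lambda>_. 0)) \<and>
     (\<forall>n. \<forall>X\<in>matrices n n (fst E).
        mnorm (n * p) (n * p) (\<lambda>r s. if r < n * p \<and> s < n * p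
            then \<phi> (r mod p) (s mod p) (X (r div p) (s div p)) else 0) \<le> snd E n X)"

definition min_norm :: "('a::cvec, 'b::cvec) tnorm" where
  "min_norm E F n U = Sup {mnorm (n * p * q) (n * p * q)
       (\<lambda>r s. if r < n * p * q \<and> s < n * p * q then
          U (r div (p * q)) (s div (p * q))
            (\<phi> ((r div q) mod p) ((s div q) mod p), \<psi> (r mod q) (s mod q)) else 0)
     | p q \<phi> \<psi>. compl_contr_mat E p \<phi> \<and> compl_contr_mat F q \<psi>}"

definition kron :: "nat \<Rightarrow> (nat \<Rightarrow> nat \<Rightarrow> 'a::cvec) \<Rightarrow> (nat \<Rightarrow> nat \<Rightarrow> 'b::cvec) \<Rightarrow> nat \<Rightarrow> nat \<Rightarrow> ('a, 'b) tensor" where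
  "kron q X Y = (\<lambda>r s. tsum [(X (r div q) (s div q), Y (r mod q) (s mod q))])"

definition proj_norm :: "('a::cvec, 'b::cvec) tnorm" where
  "proj_norm E F n U = Inf {mnorm n (p * q) a * snd E p X * snd F q Y * mnorm (p * q) n b
     | p q a b X Y. a \<in> matrices n (p * q) UNIV \<and> b \<in> matrices (p * q) n UNIV \<and>
        X \<in> matrices p p (fst E) \<and> Y \<in> matrices q q (fst F) \<and>
        U = mmult3 n (p * q) a (kron q X Y) b}"

text \<open>Operator space tensor norm (on all operator spaces living in the ambient types 'a, 'b).\<close>
definition os_tensor_norm :: "('a::cvec, 'b::cvec) tnorm \<Rightarrow> bool" where
  "os_tensor_norm \<alpha> \<longleftrightarrow>
    (\<forall>E F. opspace E \<and> opspace F \<longrightarrow>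
       opspace (tens (fst E) (fst F), \<alpha> E F) \<and>
       (\<forall>n. \<forall>U\<in>matrices n n (tens (fst E) (fst F)).
           \<alpha> E F n U \<le> proj_norm E F n U \<and> min_norm E F n U \<le> \<alpha> E F n U)) \<and>
    (\<forall>E1 F1 E2 F2 S T K1 K2. opspace E1 \<and> opspace F1 \<and> opspace E2 \<and> opspace F2 \<and>
       cb_bounded E1 E2 S K1 \<and> cb_bounded F1 F2 T K2 \<longrightarrow>
       cb_bounded (tens (fst E1) (fst F1), \<alpha> E1 F1) (tens (fst E2) (fst F2), \<alpha> E2 F2)
                  (tmap (fst E1) (fst F1) S T) (K1 * K2))"

text \<open>alpha <= c beta on E (x) F: the identity E (x)_beta F -> E (x)_alpha F has cb-norm <= c.\<close>
definition tn_le :: "('a::cvec, 'b::cvec) tnorm \<Rightarrow> ('a, 'b) tnorm \<Rightarrow> 'a opsp \<Rightarrow> 'b opsp \<Rightarrow> real \<Rightarrow> bool" where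
  "tn_le \<alpha> \<beta> E F c \<longleftrightarrow> cb_bounded (tens (fst E) (fst F), \<beta> E F) (tens (fst E) (fst F), \<alpha> E F) id c"

text \<open>C-completely bounded approximation property; nets are represented by (proper) filters.\<close>
definition finite_rank_on :: "'a::cvec set \<Rightarrow> ('a \<Rightarrow> 'a) \<Rightarrow> bool" where
  "finite_rank_on F T \<longleftrightarrow> (\<exists>B. finite B \<and> T ` F \<subseteq> cspan B)"

definition has_cbap :: "'a::cvec opsp \<Rightarrow> real \<Rightarrow> bool" where
  "has_cbap F C \<longleftrightarrow> (\<exists>\<Phi> :: ('a \<Rightarrow> 'a) filter. \<Phi> \<noteq> bot \<and>
     (\<forall>\<^sub>F T in \<Phi>. finite_rank_on (fst F) T \<and> cb_bounded F F T C) \<and>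
     (\<forall>x\<in>fst F. ((\<lambda>T. snd F 1 (mat1 (T x - x))) \<longlongrightarrow> 0) \<Phi>))"

end

theory Submission
  imports Defs
begin


lemma cvec_vs: "vector_space (cscale :: complex \<Rightarrow> 'a::cvec \<Rightarrow> 'a)"
  by unfold_locales (auto simp: cscale_add_right cscale_add_left cscale_cscale cscale_one)

interpretation cv: vector_space "cscale :: complex \<Rightarrow> 'a::cvec \<Rightarrow> 'a"
  by (rule cvec_vs)

lemma cspan_eq: "cspan B = cv.span B"
  unfolding cspan_def cv.span_explicit by blast

lemma csubspace_eq: "csubspace S = cv.subspace S"
  unfolding csubspace_def cv.subspace_def by blast

lemma cscale_zero_right[simp]: "cscale c (0::'a::cvec) = 0"
  by (rule cv.scale_zero_right)

lemma cscale_zero_left[simp]: "cscale 0 (x::'a::cvec) = 0"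
  by (rule cv.scale_zero_left)

lemma cscale_m1: "cscale (-1) (x::'a::cvec) = - x"
  by (simp add: cv.scale_minus_left)

lemma cscale_complex[simp]: "cscale a (z::complex) = a * z"
  by (simp add: cscale_complex_def)

lemma fin_dim_subspace:
  assumes "csubspace V" "V \<subseteq> cspan B" "finite B"
  shows "fin_dim V"
proof -
  have sV: "cv.subspace V" using assms(1) csubspace_eq by blast
  obtain B' where B': "B' \<subseteq> V" "cv.independent B'" "V \<subseteq> cv.span B'"
    using cv.maximal_independent_subset by blast
  have "finite B'"
    using cv.independent_span_bound[OF assms(3) B'(2)] B'(1) assms(2) cspan_eq by blast
  moreover have "cv.span B' \<subseteq> V" using cv.span_minimal[OF B'(1) sV] .
  ultimately show ?thesis unfolding fin_dim_def cspan_eq using B'(3) by blast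
qed

lemma fin_dim_csubspace: "fin_dim N \<Longrightarrow> csubspace N"
  unfolding fin_dim_def cspan_eq csubspace_eq by auto

lemma separate:
  fixes w :: "'a::cvec"
  assumes "w \<noteq> 0"
  shows "\<exists>h. clin h \<and> h w \<noteq> 0"
proof -
  interpret vp: vector_space_pair "cscale :: complex \<Rightarrow> 'a \<Rightarrow> 'a" "cscale :: complex \<Rightarrow> complex \<Rightarrow> complex"
    by unfold_locales (auto simp: cscale_add_right cscale_add_left cscale_cscale cscale_one)
  have "cv.independent {w}"
    using cv.independent_insertI[of w "{}"] assms by (simp add: cv.span_empty)
  then obtain g where g: "Vector_Spaces.linear cscale cscale g" "g w = (1::complex)"
    using vp.linear_independent_extend[of "{w}" "\<lambda>_. 1"] by auto
  have "clin g" unfolding clin_def clinear_on_def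
    using g(1) by (simp add: linear_iff_module_hom module_hom.add module_hom.scale)
  with g(2) show ?thesis by auto
qed

lemma separate2:
  fixes w w' :: "'a::cvec"
  assumes "\<And>h. clin h \<Longrightarrow> h w = h w'"
  shows "w = w'"
proof (rule ccontr)
  assume "w \<noteq> w'"
  then obtain h where h: "clin h" "h (w - w') \<noteq> 0" using separate[of "w - w'"] by auto
  have "h (w' + (w - w')) = h w' + h (w - w')" using h(1) unfolding clin_def clinear_on_def by blast
  then show False using assms[OF h(1)] h(2) by simp
qed



lemma clin_add: "clin h \<Longrightarrow> h (x + y) = h x + h y"
  unfolding clin_def clinear_on_def by blast
lemma clin_scale: "clin h \<Longrightarrow> h (cscale c x) = c * h x"
  unfolding clin_def clinear_on_def by simp
lemma clin_zero: "clin h \<Longrightarrow> h 0 = 0"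
  using clin_add[of h 0 0] by simp
lemma clin_diff: "clin h \<Longrightarrow> h (x - y) = h x - h y"
  using clin_add[of h y "x - y"] by simp

lemma tsum_Nil: "tsum [] = 0"
  unfolding tsum_def by (auto simp: fun_eq_iff)

lemma tsum_Cons: "tsum (p # xs) = tsum [p] + tsum xs"
  unfolding tsum_def by (auto simp: fun_eq_iff split: prod.splits)

definition vecf :: "('a::cvec \<Rightarrow> complex) \<Rightarrow> ('a \<times> 'b::cvec) list \<Rightarrow> 'b" where
  "vecf f xs = (\<Sum>(x, y)\<leftarrow>xs. cscale (f x) y)"

lemma vecf_clin: "clin h \<Longrightarrow> h (vecf f xs) = (\<Sum>(x, y)\<leftarrow>xs. f x * h y)"
  unfolding vecf_def
  by (induction xs) (auto simp: clin_zero clin_add clin_scale)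

lemma vecf_in: "csubspace F \<Longrightarrow> set xs \<subseteq> E \<times> F \<Longrightarrow> vecf f xs \<in> F"
  unfolding vecf_def csubspace_def
  by (induction xs) auto

lemma vecf_T:
  assumes "csubspace F" "clinear_on F T" "set xs \<subseteq> E \<times> F" "clin g"
  shows "g (T (vecf f xs)) = (\<Sum>(x, y)\<leftarrow>xs. f x * g (T y))"
  using assms(3)
proof (induction xs)
  case Nil
  have "T 0 = T 0 + T 0" using assms(1,2) unfolding csubspace_def clinear_on_def
    by (metis add.right_neutral)
  then have "T 0 = 0" by simp
  then show ?case using assms(4) by (simp add: vecf_def clin_zero)
next
  case (Cons p xs)
  obtain x y where p: "p = (x, y)" by force
  have xy: "x \<in> E" "y \<in> F" and xs: "set xs \<subseteq> E \<times> F" using Cons.prems p by auto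
  have v: "vecf f xs \<in> F" using vecf_in[OF assms(1) xs] .
  have "vecf f (p # xs) = cscale (f x) y + vecf f xs" by (simp add: vecf_def p)
  moreover have "cscale (f x) y \<in> F" using assms(1) xy unfolding csubspace_def by blast
  ultimately have "T (vecf f (p # xs)) = cscale (f x) (T y) + T (vecf f xs)"
    using assms(2) v xy unfolding clinear_on_def by simp
  then show ?case using Cons.IH[OF xs] assms(4) by (simp add: p clin_add clin_scale)
qed

lemma tsum_welldef:
  fixes xs ys :: "('a::cvec \<times> 'b::cvec) list" and T :: "'b \<Rightarrow> 'c::cvec"
  assumes "csubspace F" "clinear_on F T" "set xs \<subseteq> E \<times> F" "set ys \<subseteq> E \<times> F"
    and "tsum xs = tsum ys"
  shows "tsum (map (\<lambda>(x, y). (x, T y)) xs) = tsum (map (\<lambda>(x, y). (x, T y)) ys)"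
proof (rule ext, clarify)
  fix f :: "'a \<Rightarrow> complex" and g :: "'c \<Rightarrow> complex"
  show "tsum (map (\<lambda>(x, y). (x, T y)) xs) (f, g) = tsum (map (\<lambda>(x, y). (x, T y)) ys) (f, g)"
  proof (cases "clin f \<and> clin g")
    case True
    have "vecf f xs = vecf f ys"
    proof (rule separate2)
      fix h :: "'b \<Rightarrow> complex" assume h: "clin h"
      have "tsum xs (f, h) = tsum ys (f, h)" using assms(5) by simp
      then show "h (vecf f xs) = h (vecf f ys)" using True h
        by (simp add: vecf_clin tsum_def)
    qed
    then have "g (T (vecf f xs)) = g (T (vecf f ys))" by simp
    then have "(\<Sum>(x, y)\<leftarrow>xs. f x * g (T y)) = (\<Sum>(x, y)\<leftarrow>ys. f x * g (T y))"
      using True vecf_T[OF assms(1,2,3)] vecf_T[OF assms(1,2,4)] by metis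
    moreover have "\<And>zs. (\<Sum>(x, y)\<leftarrow>map (\<lambda>(x, y). (x, T y)) zs. f x * g y) = (\<Sum>(x, y)\<leftarrow>zs. f x * g (T y))"
      subgoal for zs by (induction zs) auto done
    ultimately show ?thesis using True
      by (simp add: tsum_def)
  next
    case False
    then show ?thesis by (auto simp: tsum_def)
  qed
qed

lemma tmap_eval:
  assumes "csubspace F" "clinear_on F T" "set xs \<subseteq> E \<times> F"
  shows "tmap E F id T (tsum xs) = tsum (map (\<lambda>(x, y). (x, T y)) xs)"
  unfolding tmap_def
proof (rule some_equality)
  show "\<exists>xsa. set xsa \<subseteq> E \<times> F \<and> tsum xs = tsum xsa \<and>
      tsum (map (\<lambda>(x, y). (x, T y)) xs) = tsum (map (\<lambda>(x, y). (id x, T y)) xsa)"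
    using assms(3) by (auto intro!: exI[of _ xs])
next
  fix v assume "\<exists>xsa. set xsa \<subseteq> E \<times> F \<and> tsum xs = tsum xsa \<and>
      v = tsum (map (\<lambda>(x, y). (id x, T y)) xsa)"
  then obtain ys where "set ys \<subseteq> E \<times> F" "tsum xs = tsum ys" "v = tsum (map (\<lambda>(x, y). (x, T y)) ys)"
    by auto
  then show "v = tsum (map (\<lambda>(x, y). (x, T y)) xs)"
    using tsum_welldef[OF assms] by metis
qed

lemma tmap_id:
  assumes "w \<in> tens E N"
  shows "tmap E N id id w = w"
  unfolding tmap_def
proof (rule some_equality)
  obtain xs where "set xs \<subseteq> E \<times> N" "w = tsum xs" using assms unfolding tens_def by blast
  then show "\<exists>xs. set xs \<subseteq> E \<times> N \<and> w = tsum xs \<and> w = tsum (map (\<lambda>(x, y). (id x, id y)) xs)"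
    by (auto intro!: exI[of _ xs] simp: case_prod_beta)
next
  fix v assume "\<exists>xs. set xs \<subseteq> E \<times> N \<and> w = tsum xs \<and> v = tsum (map (\<lambda>(x, y). (id x, id y)) xs)"
  then show "v = w" by (auto simp: case_prod_beta)
qed

lemma tsum_diff:
  "tsum xs - tsum (map (\<lambda>(x, y). (x, T y)) xs) = tsum (map (\<lambda>(x, y). (x, y - T y)) xs)"
proof (induction xs)
  case Nil then show ?case by (simp add: tsum_Nil)
next
  case (Cons p xs)
  obtain x y where p: "p = (x, y)" by force
  have 1: "tsum [(x, y)] - tsum [(x, T y)] = tsum [(x, y - T y)]"
    unfolding tsum_def by (auto simp: fun_eq_iff clin_diff algebra_simps)
  have "tsum (p # xs) - tsum (map (\<lambda>(x, y). (x, T y)) (p # xs))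
     = (tsum [(x, y)] - tsum [(x, T y)]) + (tsum xs - tsum (map (\<lambda>(x, y). (x, T y)) xs))"
    using tsum_Cons[of "(x, y)" xs] tsum_Cons[of "(x, T y)" "map (\<lambda>(x, y). (x, T y)) xs"]
    by (simp add: p)
  also have "... = tsum [(x, y - T y)] + tsum (map (\<lambda>(x, y). (x, y - T y)) xs)"
    by (simp only: 1 Cons.IH)
  also have "... = tsum (map (\<lambda>(x, y). (x, y - T y)) (p # xs))"
    using tsum_Cons[of "(x, y - T y)" "map (\<lambda>(x, y). (x, y - T y)) xs"] by (simp add: p)
  finally show ?case .
qed



lemma cmod_le1:
  fixes m i :: nat
  assumes "i < m" "(\<Sum>r<m. (cmod (\<eta> r))\<^sup>2) \<le> 1"
  shows "cmod (\<eta> i) \<le> 1"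
proof -
  have "(cmod (\<eta> i))\<^sup>2 \<le> (\<Sum>r<m. (cmod (\<eta> r))\<^sup>2)"
    using assms(1) by (intro member_le_sum) auto
  then have "(cmod (\<eta> i))\<^sup>2 \<le> 1" using assms(2) by linarith
  then show ?thesis by (simp add: power_le_one_iff abs_square_le_1)
qed

lemma mnorm_bound:
  assumes "\<And>\<xi> \<eta>. (\<Sum>j<n. (cmod (\<xi> j))\<^sup>2) \<le> 1 \<Longrightarrow> (\<Sum>i<m. (cmod (\<eta> i))\<^sup>2) \<le> 1 \<Longrightarrow>
       cmod (\<Sum>i<m. \<Sum>j<n. cnj (\<eta> i) * a i j * \<xi> j) \<le> K"
  shows "0 \<le> mnorm m n a \<and> mnorm m n a \<le> K"
proof -
  let ?S = "{cmod (\<Sum>i<m. \<Sum>j<n. cnj (\<eta> i) * a i j * \<xi> j) | \<xi> \<eta>.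
       (\<Sum>j<n. (cmod (\<xi> j))\<^sup>2) \<le> 1 \<and> (\<Sum>i<m. (cmod (\<eta> i))\<^sup>2) \<le> 1}"
  have 0: "0 \<in> ?S" by (rule CollectI, rule exI[of _ "\<lambda>_. 0"], rule exI[of _ "\<lambda>_. 0"]) simp
  have b: "\<And>s. s \<in> ?S \<Longrightarrow> s \<le> K" using assms by blast
  have "0 \<le> Sup ?S" using 0 b by (intro cSup_upper) (auto intro!: bdd_aboveI)
  moreover have "Sup ?S \<le> K" using 0 b by (intro cSup_least) auto
  ultimately show ?thesis unfolding mnorm_def by simp
qed

lemma mnorm_nonneg: "0 \<le> mnorm m n a"
proof -
  have "0 \<le> mnorm m n a \<and> mnorm m n a \<le> (\<Sum>i<m. \<Sum>j<n. cmod (a i j))"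
  proof (rule mnorm_bound)
    fix \<xi> \<eta> assume x: "(\<Sum>j<n. (cmod (\<xi> j))\<^sup>2) \<le> 1" and y: "(\<Sum>i<m. (cmod (\<eta> i))\<^sup>2) \<le> 1"
    have "cmod (\<Sum>i<m. \<Sum>j<n. cnj (\<eta> i) * a i j * \<xi> j) \<le> (\<Sum>i<m. cmod (\<Sum>j<n. cnj (\<eta> i) * a i j * \<xi> j))"
      by (rule norm_sum)
    also have "\<dots> \<le> (\<Sum>i<m. \<Sum>j<n. cmod (cnj (\<eta> i) * a i j * \<xi> j))"
      by (intro sum_mono norm_sum)
    also have "\<dots> \<le> (\<Sum>i<m. \<Sum>j<n. cmod (a i j))"
    proof (intro sum_mono)
      fix i j assume i: "i \<in> {..<m}" and j: "j \<in> {..<n}"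
      have "cmod (\<eta> i) \<le> 1" using cmod_le1[OF _ y] i by simp
      moreover have "cmod (\<xi> j) \<le> 1" using cmod_le1[OF _ x] j by simp
      ultimately have "cmod (\<eta> i) * cmod (a i j) * cmod (\<xi> j) \<le> cmod (a i j)"
        by (meson mult_left_le_one_le mult_right_le_one_le norm_ge_zero order_trans zero_le_mult_iff)
      then show "cmod (cnj (\<eta> i) * a i j * \<xi> j) \<le> cmod (a i j)"
        by (simp add: norm_mult)
    qed
    finally show "cmod (\<Sum>i<m. \<Sum>j<n. cnj (\<eta> i) * a i j * \<xi> j) \<le> (\<Sum>i<m. \<Sum>j<n. cmod (a i j))" .
  qed
  then show ?thesis by simp
qed

lemma mnorm_unit:
  assumes "i < m" "j < k"
  shows "mnorm m k (\<lambda>r s. if r = i \<and> s = j then 1 else 0) \<le> 1"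
proof -
  have "0 \<le> mnorm m k (\<lambda>r s. if r = i \<and> s = j then 1 else 0) \<and> mnorm m k (\<lambda>r s. if r = i \<and> s = j then 1 else 0) \<le> 1"
  proof (rule mnorm_bound)
    fix \<xi> \<eta> assume x: "(\<Sum>j<k. (cmod (\<xi> j))\<^sup>2) \<le> 1" and y: "(\<Sum>i<m. (cmod (\<eta> i))\<^sup>2) \<le> 1"
    have "(\<Sum>r<m. \<Sum>s<k. cnj (\<eta> r) * (if r = i \<and> s = j then 1 else 0) * \<xi> s) = cnj (\<eta> i) * \<xi> j"
    proof -
      have "\<And>r. (\<Sum>s<k. cnj (\<eta> r) * (if r = i \<and> s = j then 1 else 0) * \<xi> s) = (if r = i then cnj (\<eta> i) * \<xi> j else 0)"
        using assms by (simp add: sum.delta if_distrib if_distribR cong: if_cong)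
      then show ?thesis using assms by (simp add: sum.delta)
    qed
    moreover have "cmod (\<eta> i) \<le> 1" using cmod_le1[OF assms(1) y] .
    moreover have "cmod (\<xi> j) \<le> 1" using cmod_le1[OF assms(2) x] .
    ultimately show "cmod (\<Sum>r<m. \<Sum>s<k. cnj (\<eta> r) * (if r = i \<and> s = j then 1 else 0) * \<xi> s) \<le> 1"
      by (simp add: norm_mult mult_le_one)
  qed
  then show ?thesis by simp
qed



lemma os_sub: "opspace G \<Longrightarrow> csubspace (fst G)"
  unfolding opspace_def Let_def by blast
lemma os_nonneg: "opspace G \<Longrightarrow> X \<in> matrices n n (fst G) \<Longrightarrow> 0 \<le> snd G n X"
  unfolding opspace_def Let_def by blast
lemma os_zero_iff: "opspace G \<Longrightarrow> X \<in> matrices n n (fst G) \<Longrightarrow> snd G n X = 0 \<longleftrightarrow> X = zero_mat"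
  unfolding opspace_def Let_def by blast
lemma os_tri: "opspace G \<Longrightarrow> X \<in> matrices n n (fst G) \<Longrightarrow> Y \<in> matrices n n (fst G) \<Longrightarrow>
   snd G n (X + Y) \<le> snd G n X + snd G n Y"
  unfolding opspace_def Let_def by blast
lemma os_scale: "opspace G \<Longrightarrow> X \<in> matrices n n (fst G) \<Longrightarrow> snd G n (cscale c X) = cmod c * snd G n X"
  unfolding opspace_def Let_def by blast
lemma os_mult3: "opspace G \<Longrightarrow> X \<in> matrices k k (fst G) \<Longrightarrow> a \<in> matrices m k UNIV \<Longrightarrow> b \<in> matrices k m UNIV \<Longrightarrow>
        snd G m (mmult3 m k a X b) \<le> mnorm m k a * snd G k X * mnorm k m b"
  unfolding opspace_def Let_def by blast

lemma zero_mat_eq: "zero_mat = 0"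
  by (simp add: zero_mat_def fun_eq_iff)

lemma zero_in_mat: "0 \<in> V \<Longrightarrow> (0 :: nat \<Rightarrow> nat \<Rightarrow> 'v::zero) \<in> matrices n n V"
  by (simp add: matrices_def)

lemma os_zero: "opspace G \<Longrightarrow> snd G n 0 = 0"
  using os_zero_iff[of G 0 n] zero_in_mat[of "fst G" n] os_sub[of G]
  by (simp add: zero_mat_eq csubspace_def)

lemma mat_add: "csubspace V \<Longrightarrow> X \<in> matrices n n V \<Longrightarrow> Y \<in> matrices n n V \<Longrightarrow> X + Y \<in> matrices n n V"
  unfolding matrices_def csubspace_def by auto

lemma mat1_in: "w \<in> V \<Longrightarrow> mat1 w \<in> matrices 1 1 V"
  unfolding matrices_def mat1_def by auto

lemma sum_app2: "(sum f I) r s = (\<Sum>p\<in>I. f p r s)"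
  by (induction I rule: infinite_finite_induct) auto

lemma os_sum:
  assumes "opspace G" "finite I" "\<forall>i\<in>I. f i \<in> matrices n n (fst G)"
  shows "sum f I \<in> matrices n n (fst G) \<and> snd G n (sum f I) \<le> (\<Sum>i\<in>I. snd G n (f i))"
  using assms(2,3)
proof (induction I rule: finite_induct)
  case empty
  have z: "0 \<in> fst G" using os_sub[OF assms(1)] by (simp add: csubspace_def)
  show ?case using zero_in_mat[OF z, of n] os_zero[OF assms(1), of n]
    by (metis order_refl sum.empty)
next
  case (insert x F)
  then show ?case using mat_add[OF os_sub[OF assms(1)]] os_tri[OF assms(1)]
    by (smt (verit, ccfv_threshold) insert_iff sum.insert)
qed

lemma os_single:
  assumes "opspace G" "i < n" "j < n" "w \<in> fst G"
  shows "snd G n (\<lambda>r s. if r = i \<and> s = j then w else 0) \<le> snd G 1 (mat1 w)"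
proof -
  define a :: "nat \<Rightarrow> nat \<Rightarrow> complex" where "a = (\<lambda>r s. if r = i \<and> s = 0 then 1 else 0)"
  define b :: "nat \<Rightarrow> nat \<Rightarrow> complex" where "b = (\<lambda>r s. if r = 0 \<and> s = j then 1 else 0)"
  have am: "a \<in> matrices n 1 UNIV" using assms(2) by (auto simp: a_def matrices_def)
  have bm: "b \<in> matrices 1 n UNIV" using assms(3) by (auto simp: b_def matrices_def)
  have eq: "mmult3 n 1 a (mat1 w) b = (\<lambda>r s. if r = i \<and> s = j then w else 0)"
    using assms(2,3) by (auto simp: mmult3_def a_def b_def mat1_def fun_eq_iff cscale_one)
  have "snd G n (mmult3 n 1 a (mat1 w) b) \<le> mnorm n 1 a * snd G 1 (mat1 w) * mnorm 1 n b"
    using os_mult3[OF assms(1) mat1_in[OF assms(4)] am bm] .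
  also have "\<dots> \<le> 1 * snd G 1 (mat1 w) * 1"
  proof (intro mult_mono)
    show "mnorm n 1 a \<le> 1" unfolding a_def using mnorm_unit[of i n 0 1] assms(2) by simp
    show "mnorm 1 n b \<le> 1" unfolding b_def using mnorm_unit[of 0 1 j n] assms(3) by simp
  qed (use os_nonneg[OF assms(1) mat1_in[OF assms(4)]] mnorm_nonneg in auto)
  finally show ?thesis using eq by simp
qed

lemma os_decomp:
  assumes "opspace G" "W \<in> matrices n n (fst G)"
  shows "snd G n W \<le> (\<Sum>p\<in>{..<n}\<times>{..<n}. snd G 1 (mat1 (W (fst p) (snd p))))"
proof -
  define f where "f = (\<lambda>p. (\<lambda>r s. if r = fst p \<and> s = snd p then W (fst p) (snd p) else 0))"
  have Wp: "\<And>p. p \<in> {..<n}\<times>{..<n} \<Longrightarrow> W (fst p) (snd p) \<in> fst G"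
    using assms(2) by (auto simp: matrices_def)
  have fm: "\<forall>p\<in>{..<n}\<times>{..<n}. f p \<in> matrices n n (fst G)"
    using Wp os_sub[OF assms(1)] by (auto simp: f_def matrices_def csubspace_def)
  have "W = sum f ({..<n}\<times>{..<n})"
  proof (rule ext, rule ext)
    fix r s
    have "sum f ({..<n}\<times>{..<n}) r s = (\<Sum>p\<in>{..<n}\<times>{..<n}. f p r s)"
      by (rule sum_app2)  
    also have "\<dots> = (\<Sum>p\<in>{..<n}\<times>{..<n}. if p = (r, s) then W r s else 0)"
      by (intro sum.cong) (auto simp: f_def)
    also have "\<dots> = W r s"
      using assms(2) by (auto simp: sum.delta' matrices_def)
    finally show "W r s = sum f ({..<n}\<times>{..<n}) r s" by simp
  qed
  then have "snd G n W \<le> (\<Sum>p\<in>{..<n}\<times>{..<n}. snd G n (f p))"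
    using os_sum[OF assms(1) _ fm] by simp
  also have "\<dots> \<le> (\<Sum>p\<in>{..<n}\<times>{..<n}. snd G 1 (mat1 (W (fst p) (snd p))))"
  proof (intro sum_mono)
    fix p assume p: "p \<in> {..<n}\<times>{..<n}"
    show "snd G n (f p) \<le> snd G 1 (mat1 (W (fst p) (snd p)))"
      unfolding f_def using os_single[OF assms(1) _ _ Wp[OF p]] p by auto
  qed
  finally show ?thesis .
qed



lemma tn_os: "os_tensor_norm \<alpha> \<Longrightarrow> opspace E \<Longrightarrow> opspace F \<Longrightarrow> opspace (tens (fst E) (fst F), \<alpha> E F)"
  unfolding os_tensor_norm_def by blast

lemma tn_proj: "os_tensor_norm \<alpha> \<Longrightarrow> opspace E \<Longrightarrow> opspace F \<Longrightarrow> U \<in> matrices n n (tens (fst E) (fst F)) \<Longrightarrow>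
   \<alpha> E F n U \<le> proj_norm E F n U"
  unfolding os_tensor_norm_def by blast

lemma tn_cb: "os_tensor_norm \<alpha> \<Longrightarrow> opspace E1 \<Longrightarrow> opspace F1 \<Longrightarrow> opspace E2 \<Longrightarrow> opspace F2 \<Longrightarrow>
       cb_bounded E1 E2 S K1 \<Longrightarrow> cb_bounded F1 F2 T K2 \<Longrightarrow>
       cb_bounded (tens (fst E1) (fst F1), \<alpha> E1 F1) (tens (fst E2) (fst F2), \<alpha> E2 F2)
                  (tmap (fst E1) (fst F1) S T) (K1 * K2)"
  unfolding os_tensor_norm_def by blast

lemma tsum_in_tens: "set xs \<subseteq> E \<times> F \<Longrightarrow> tsum xs \<in> tens E F"
  unfolding tens_def by blast

lemma mat1_add: "mat1 (a + b :: 'v::monoid_add) = mat1 a + mat1 b"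
  by (auto simp: mat1_def fun_eq_iff)

lemma mat1_zero: "mat1 (0::'v::zero) = 0"
  by (auto simp: mat1_def fun_eq_iff)

lemma tn_elem:
  assumes "os_tensor_norm \<alpha>" "opspace E" "opspace F" "x \<in> fst E" "y \<in> fst F"
  shows "\<alpha> E F 1 (mat1 (tsum [(x, y)])) \<le> snd E 1 (mat1 x) * snd F 1 (mat1 y)"
proof -
  let ?S = "{mnorm 1 (p * q) a * snd E p X * snd F q Y * mnorm (p * q) 1 b
     | p q a b X Y. a \<in> matrices 1 (p * q) UNIV \<and> b \<in> matrices (p * q) 1 UNIV \<and>
        X \<in> matrices p p (fst E) \<and> Y \<in> matrices q q (fst F) \<and>
        mat1 (tsum [(x, y)]) = mmult3 1 (p * q) a (kron q X Y) b}"
  have m1: "(mat1 1 :: nat \<Rightarrow> nat \<Rightarrow> complex) = (\<lambda>r s. if r = 0 \<and> s = 0 then 1 else 0)"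
    by (simp add: mat1_def)
  have am: "(mat1 1 :: nat \<Rightarrow> nat \<Rightarrow> complex) \<in> matrices 1 1 UNIV" by (rule mat1_in) simp
  have eq: "mat1 (tsum [(x, y)]) = mmult3 1 (1 * 1) (mat1 1) (kron 1 (mat1 x) (mat1 y)) (mat1 1)"
    by (auto simp: mmult3_def mat1_def kron_def fun_eq_iff cscale_one)
  have mem: "mnorm 1 (1 * 1) (mat1 1) * snd E 1 (mat1 x) * snd F 1 (mat1 y) * mnorm (1 * 1) 1 (mat1 1) \<in> ?S"
  proof -
    have "\<exists>p q a b X Y. mnorm 1 (1 * 1) (mat1 1) * snd E 1 (mat1 x) * snd F 1 (mat1 y) * mnorm (1 * 1) 1 (mat1 1)
       = mnorm 1 (p * q) a * snd E p X * snd F q Y * mnorm (p * q) 1 b \<and>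
       a \<in> matrices 1 (p * q) UNIV \<and> b \<in> matrices (p * q) 1 UNIV \<and>
        X \<in> matrices p p (fst E) \<and> Y \<in> matrices q q (fst F) \<and>
        mat1 (tsum [(x, y)]) = mmult3 1 (p * q) a (kron q X Y) b"
      apply (rule exI[of _ 1], rule exI[of _ 1], rule exI[of _ "mat1 1"], rule exI[of _ "mat1 1"],
          rule exI[of _ "mat1 x"], rule exI[of _ "mat1 y"])
      using am eq mat1_in[OF assms(4)] mat1_in[OF assms(5)] by simp
    then show ?thesis by blast
  qed
  have bdd: "bdd_below ?S"
  proof (rule bdd_belowI)
    fix s assume "s \<in> ?S"
    then show "0 \<le> s" using os_nonneg[OF assms(2)] os_nonneg[OF assms(3)] mnorm_nonneg
      by (auto intro!: mult_nonneg_nonneg)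
  qed
  have tin: "tsum [(x, y)] \<in> tens (fst E) (fst F)" using assms(4,5) by (intro tsum_in_tens) auto
  have "\<alpha> E F 1 (mat1 (tsum [(x, y)])) \<le> proj_norm E F 1 (mat1 (tsum [(x, y)]))"
    using tn_proj[OF assms(1-3) mat1_in[OF tin]] .
  also have "\<dots> \<le> mnorm 1 (1 * 1) (mat1 1) * snd E 1 (mat1 x) * snd F 1 (mat1 y) * mnorm (1 * 1) 1 (mat1 1)"
    unfolding proj_norm_def using cInf_lower[OF mem bdd] .
  also have "\<dots> \<le> 1 * snd E 1 (mat1 x) * snd F 1 (mat1 y) * 1"
  proof (intro mult_mono)
    show "mnorm 1 (1 * 1) (mat1 1) \<le> 1" unfolding m1 using mnorm_unit[of 0 1 0 1] by simp
    show "mnorm (1 * 1) 1 (mat1 1) \<le> 1" unfolding m1 using mnorm_unit[of 0 1 0 1] by simp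
  qed (use os_nonneg[OF assms(2) mat1_in[OF assms(4)]] os_nonneg[OF assms(3) mat1_in[OF assms(5)]]
        mnorm_nonneg in auto)
  finally show ?thesis by simp
qed

lemma tn_list:
  assumes "os_tensor_norm \<alpha>" "opspace E" "opspace F" "set ws \<subseteq> fst E \<times> fst F"
  shows "\<alpha> E F 1 (mat1 (tsum ws)) \<le> (\<Sum>(x, y)\<leftarrow>ws. snd E 1 (mat1 x) * snd F 1 (mat1 y))"
  using assms(4)
proof (induction ws)
  case Nil
  have "mat1 (tsum []) = (0 :: nat \<Rightarrow> nat \<Rightarrow> ('a, 'b) tensor)" by (simp only: tsum_Nil mat1_zero)
  then have "\<alpha> E F 1 (mat1 (tsum [])) = 0" using os_zero[OF tn_os[OF assms(1-3)], of 1] by (simp only: snd_conv)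
  then show ?case by simp
next
  case (Cons p ws)
  obtain x y where p: "p = (x, y)" by force
  have xy: "x \<in> fst E" "y \<in> fst F" and ws: "set ws \<subseteq> fst E \<times> fst F" using Cons.prems p by auto
  have "\<alpha> E F 1 (mat1 (tsum (p # ws))) = \<alpha> E F 1 (mat1 (tsum [(x, y)]) + mat1 (tsum ws))"
    using tsum_Cons[of "(x, y)" ws] by (simp only: p mat1_add)
  also have "\<dots> \<le> \<alpha> E F 1 (mat1 (tsum [(x, y)])) + \<alpha> E F 1 (mat1 (tsum ws))"
  proof -
    have "set [(x, y)] \<subseteq> fst E \<times> fst F" using xy by simp
    then have a: "mat1 (tsum [(x, y)]) \<in> matrices 1 1 (tens (fst E) (fst F))"
      by (intro mat1_in tsum_in_tens)
    have b: "mat1 (tsum ws) \<in> matrices 1 1 (tens (fst E) (fst F))"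
      using ws by (intro mat1_in tsum_in_tens)
    show ?thesis using os_tri[OF tn_os[OF assms(1-3)], of "mat1 (tsum [(x, y)])" 1 "mat1 (tsum ws)"] a b
      by (simp only: fst_conv snd_conv)
  qed
  also have "\<dots> \<le> snd E 1 (mat1 x) * snd F 1 (mat1 y) + (\<Sum>(x, y)\<leftarrow>ws. snd E 1 (mat1 x) * snd F 1 (mat1 y))"
    using tn_elem[OF assms(1-3) xy] Cons.IH[OF ws] by linarith
  finally show ?case by (simp add: p)
qed



lemma mat_mono: "N \<subseteq> M \<Longrightarrow> matrices m n N \<subseteq> matrices m n M"
  unfolding matrices_def by blast

lemma os_restr:
  assumes "opspace F" "csubspace N" "N \<subseteq> fst F"
  shows "opspace (restr F N)"
proof -
  have mono: "\<And>m. matrices m m N \<subseteq> matrices m m (fst F)" using mat_mono[OF assms(3)] by blast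
  show ?thesis
    unfolding opspace_def Let_def restr_def fst_conv snd_conv
  proof (intro conjI allI ballI impI)
    show "csubspace N" by fact
  next
    fix n X assume "X \<in> matrices n n N"
    then have X: "X \<in> matrices n n (fst F)" using mono by blast
    show "0 \<le> snd F n X" using os_nonneg[OF assms(1) X] .
    show "(snd F n X = 0) = (X = zero_mat)" using os_zero_iff[OF assms(1) X] .
    show "\<And>c. snd F n (cscale c X) = cmod c * snd F n X" using os_scale[OF assms(1) X] .
  next
    fix n X Y assume "X \<in> matrices n n N" "Y \<in> matrices n n N"
    then show "snd F n (X + Y) \<le> snd F n X + snd F n Y" using os_tri[OF assms(1)] mono by blast
  next
    fix m n X Y assume "X \<in> matrices m m N" "Y \<in> matrices n n N"
    then show "snd F (m + n) (dsum m n X Y) = max (snd F m X) (snd F n Y)"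
      using assms(1) mono unfolding opspace_def Let_def by blast
  next
    fix m k and a b :: "nat \<Rightarrow> nat \<Rightarrow> complex" and X assume "X \<in> matrices k k N" "a \<in> matrices m k UNIV" "b \<in> matrices k m UNIV"
    then show "snd F m (mmult3 m k a X b) \<le> mnorm m k a * snd F k X * mnorm k m b"
      using os_mult3[OF assms(1)] mono by blast
  qed
qed

lemma cb_id: "cb_bounded E E id 1"
  unfolding cb_bounded_def clinear_on_def by simp

lemma cb_incl: "N \<subseteq> fst F \<Longrightarrow> cb_bounded (restr F N) F id 1"
  unfolding cb_bounded_def clinear_on_def restr_def by auto

lemma cb_restrict: "cb_bounded F F T C \<Longrightarrow> T ` fst F \<subseteq> N \<Longrightarrow> cb_bounded F (restr F N) T C"
  unfolding cb_bounded_def restr_def by auto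

lemma tendsto_list:
  assumes "\<And>p. p \<in> set ws \<Longrightarrow> ((\<lambda>T. g T p) \<longlongrightarrow> 0) \<Phi>"
  shows "((\<lambda>T. sum_list (map (g T) ws)) \<longlongrightarrow> (0::real)) \<Phi>"
  using assms
proof (induction ws)
  case Nil then show ?case by simp
next
  case (Cons p ws)
  then show ?case using tendsto_add[of "\<lambda>T. g T p" 0 \<Phi> "\<lambda>T. sum_list (map (g T) ws)" 0] by simp
qed

lemma sub_minus: "csubspace V \<Longrightarrow> a \<in> V \<Longrightarrow> b \<in> V \<Longrightarrow> a - b \<in> V"
  unfolding csubspace_def using cscale_m1[of b] by (metis diff_conv_add_uminus)

lemma flip_norm:
  assumes "opspace F" "y \<in> fst F" "T y \<in> fst F"
  shows "snd F 1 (mat1 (y - T y)) = snd F 1 (mat1 (T y - y))"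
proof -
  have "mat1 (y - T y) = cscale (-1) (mat1 (T y - y))"
    by (auto simp: cscale_fun_def mat1_def fun_eq_iff cscale_m1)
  moreover have "T y - y \<in> fst F" using sub_minus[OF os_sub[OF assms(1)] assms(3,2)] .
  ultimately show ?thesis using os_scale[OF assms(1) mat1_in, of "T y - y" "-1"] by simp
qed

lemma list_term:
  assumes "opspace F" "set ws \<subseteq> E \<times> fst F" "\<forall>y\<in>fst F. T y \<in> fst F"
  shows "(\<Sum>(x, y)\<leftarrow>map (\<lambda>(x, y). (x, y - T y)) ws. a x * snd F 1 (mat1 y))
       = (\<Sum>(x, y)\<leftarrow>ws. a x * snd F 1 (mat1 (T y - y)))"
  using assms(2)
proof (induction ws)
  case Nil then show ?case by simp
next
  case (Cons p ws)
  obtain x y where p: "p = (x, y)" by force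
  have "y \<in> fst F" using Cons.prems p by auto
  then show ?case using Cons flip_norm[OF assms(1), of y T] assms(3) p by auto
qed



lemma key_step:
  fixes \<alpha> \<beta> :: "('a::cvec, 'b::cvec) tnorm"
    and E :: "'a opsp" and F :: "'b opsp"
  assumes ta: "os_tensor_norm \<alpha>" and tb: "os_tensor_norm \<beta>"
    and osE: "opspace E" and osF: "opspace F"
    and c0: "c \<ge> 0"
    and cof: "\<forall>M. fin_dim M \<and> M \<subseteq> fst F \<longrightarrow>
           (\<exists>N. fin_dim N \<and> M \<subseteq> N \<and> N \<subseteq> fst F \<and> tn_le \<alpha> \<beta> E (restr F N) c)"
    and U: "U \<in> matrices n n (tens (fst E) (fst F))"
    and xs: "\<And>i j. i < n \<Longrightarrow> j < n \<Longrightarrow> set (xs i j) \<subseteq> fst E \<times> fst F \<and> U i j = tsum (xs i j)"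
    and fr: "finite_rank_on (fst F) T" and cbT: "cb_bounded F F T C"
  shows "\<alpha> E F n U \<le> C * c * \<beta> E F n U +
     (\<Sum>p\<in>{..<n}\<times>{..<n}. \<Sum>(x, y)\<leftarrow>xs (fst p) (snd p). snd E 1 (mat1 x) * snd F 1 (mat1 (T y - y)))"
proof -
  have sF: "csubspace (fst F)" using os_sub[OF osF] .
  have linT: "clinear_on (fst F) T" and imgT: "T ` fst F \<subseteq> fst F"
    using cbT unfolding cb_bounded_def by auto
  obtain B where B: "finite B" "T ` fst F \<subseteq> cspan B" using fr unfolding finite_rank_on_def by blast
  have T0: "T 0 = 0"
  proof -
    have "T (0 + 0) = T 0 + T 0" using linT sF unfolding clinear_on_def csubspace_def by blast
    then show ?thesis by simp
  qed
  have subimg: "csubspace (T ` fst F)"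
    unfolding csubspace_def
  proof (intro conjI ballI allI)
    show "0 \<in> T ` fst F" using T0 sF unfolding csubspace_def by force
  next
    fix a b assume "a \<in> T ` fst F" "b \<in> T ` fst F"
    then obtain x y where "x \<in> fst F" "y \<in> fst F" "a = T x" "b = T y" by blast
    then show "a + b \<in> T ` fst F" using linT sF unfolding clinear_on_def csubspace_def
      by (metis image_eqI)
  next
    fix c a assume "a \<in> T ` fst F"
    then obtain x where "x \<in> fst F" "a = T x" by blast
    then show "cscale c a \<in> T ` fst F" using linT sF unfolding clinear_on_def csubspace_def
      by (metis image_eqI)
  qed
  have "fin_dim (T ` fst F)" using fin_dim_subspace[OF subimg B(2) B(1)] .
  then obtain N where N: "fin_dim N" "T ` fst F \<subseteq> N" "N \<subseteq> fst F" "tn_le \<alpha> \<beta> E (restr F N) c"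
    using cof imgT by blast
  have sN: "csubspace N" using fin_dim_csubspace[OF N(1)] .
  have osN: "opspace (restr F N)" using os_restr[OF osF sN N(3)] .
  have fN: "fst (restr F N) = N" and sndN: "snd (restr F N) = snd F" by (simp_all add: restr_def)
  define V where "V = (\<lambda>i j. tmap (fst E) (fst F) id T (U i j))"
  have Vin: "V i j = tsum (map (\<lambda>(x, y). (x, T y)) (xs i j))" if "i < n" "j < n" for i j
    unfolding V_def using xs[OF that] tmap_eval[OF sF linT] by metis
  have Vout: "V i j = 0" if "\<not> (i < n \<and> j < n)" for i j
  proof -
    have "U i j = tsum []" using U that by (simp add: matrices_def tsum_Nil)
    then show ?thesis unfolding V_def using tmap_eval[OF sF linT, of "[]" "fst E"]
      by (simp add: tsum_Nil)
  qed
  have mapN: "set (map (\<lambda>(x, y). (x, T y)) (xs i j)) \<subseteq> fst E \<times> N" if "i < n" "j < n" for i j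
    using xs[OF that] N(2) by auto
  have VN: "V \<in> matrices n n (tens (fst E) N)"
    unfolding matrices_def mem_Collect_eq
  proof (intro conjI allI impI)
    fix i j assume "i < n \<and> j < n"
    then have i: "i < n" "j < n" by auto
    show "V i j \<in> tens (fst E) N" unfolding Vin[OF i] by (rule tsum_in_tens[OF mapN[OF i]])
  next
    fix i j assume "\<not> (i < n \<and> j < n)"
    then show "V i j = 0" using Vout by blast
  qed
  have tensNF: "tens (fst E) N \<subseteq> tens (fst E) (fst F)"
    unfolding tens_def using N(3) by blast
  have VF: "V \<in> matrices n n (tens (fst E) (fst F))" using VN mat_mono[OF tensNF] by blast
  have st1: "\<beta> E (restr F N) n V \<le> C * \<beta> E F n U"
  proof -
    have "cb_bounded (tens (fst E) (fst F), \<beta> E F) (tens (fst E) (fst (restr F N)), \<beta> E (restr F N))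
            (tmap (fst E) (fst F) id T) (1 * C)"
      using tn_cb[OF tb osE osF osE osN cb_id cb_restrict[OF cbT N(2)]] .
    then have "\<beta> E (restr F N) n (\<lambda>i j. tmap (fst E) (fst F) id T (U i j)) \<le> 1 * C * \<beta> E F n U"
      unfolding cb_bounded_def using U by simp
    then show ?thesis unfolding V_def by simp
  qed
  have st2: "\<alpha> E (restr F N) n V \<le> c * \<beta> E (restr F N) n V"
    using N(4) VN unfolding tn_le_def cb_bounded_def fN by simp
  have st3: "\<alpha> E F n V \<le> \<alpha> E (restr F N) n V"
  proof -
    have "cb_bounded (tens (fst E) (fst (restr F N)), \<alpha> E (restr F N)) (tens (fst E) (fst F), \<alpha> E F)
            (tmap (fst E) (fst (restr F N)) id id) (1 * 1)"
      using tn_cb[OF ta osE osN osE osF cb_id cb_incl[OF N(3)]] .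
    then have "\<alpha> E F n (\<lambda>i j. tmap (fst E) N id id (V i j)) \<le> 1 * 1 * \<alpha> E (restr F N) n V"
      unfolding cb_bounded_def fN using VN by simp
    moreover have "(\<lambda>i j. tmap (fst E) N id id (V i j)) = V"
    proof (rule ext, rule ext)
      fix i j
      have "V i j \<in> tens (fst E) N" using VN unfolding matrices_def
        using tsum_in_tens[of "[]"] by (cases "i < n \<and> j < n") (auto simp: tsum_Nil)
      then show "tmap (fst E) N id id (V i j) = V i j" by (rule tmap_id)
    qed
    ultimately show ?thesis by simp
  qed
  have osA: "opspace (tens (fst E) (fst F), \<alpha> E F)" using tn_os[OF ta osE osF] .
  have Dval: "(U - V) i j = tsum (map (\<lambda>(x, y). (x, y - T y)) (xs i j))" if "i < n" "j < n" for i j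
  proof -
    have "(U - V) i j = U i j - V i j" by simp
    also have "\<dots> = tsum (xs i j) - tsum (map (\<lambda>(x, y). (x, T y)) (xs i j))"
      using xs[OF that] Vin[OF that] by simp
    also have "\<dots> = tsum (map (\<lambda>(x, y). (x, y - T y)) (xs i j))" by (rule tsum_diff)
    finally show ?thesis .
  qed
  have Dset: "set (map (\<lambda>(x, y). (x, y - T y)) (xs i j)) \<subseteq> fst E \<times> fst F" if "i < n" "j < n" for i j
  proof
    fix q assume "q \<in> set (map (\<lambda>(x, y). (x, y - T y)) (xs i j))"
    then obtain x y where q: "q = (x, y - T y)" "(x, y) \<in> set (xs i j)" by auto
    then have xy: "x \<in> fst E" "y \<in> fst F" using xs[OF that] by auto
    then have "T y \<in> fst F" using imgT by blast
    then have "y - T y \<in> fst F" using sub_minus[OF sF xy(2)] by blast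
    then show "q \<in> fst E \<times> fst F" using q xy by simp
  qed
  have DF: "U - V \<in> matrices n n (tens (fst E) (fst F))"
    unfolding matrices_def mem_Collect_eq
  proof (intro conjI allI impI)
    fix i j assume "i < n \<and> j < n"
    then have i: "i < n" "j < n" by auto
    show "(U - V) i j \<in> tens (fst E) (fst F)" unfolding Dval[OF i] by (rule tsum_in_tens[OF Dset[OF i]])
  next
    fix i j assume ij: "\<not> (i < n \<and> j < n)"
    then have "U i j = 0" using U unfolding matrices_def by blast
    then show "(U - V) i j = 0" using Vout[OF ij] by simp
  qed
  have st4: "\<alpha> E F n U \<le> \<alpha> E F n V + \<alpha> E F n (U - V)"
    using os_tri[OF osA, of V n "U - V"] VF DF by simp
  have st5: "\<alpha> E F n (U - V) \<le>
     (\<Sum>p\<in>{..<n}\<times>{..<n}. \<Sum>(x, y)\<leftarrow>xs (fst p) (snd p). snd E 1 (mat1 x) * snd F 1 (mat1 (T y - y)))"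
  proof -
    have "\<alpha> E F n (U - V) \<le> (\<Sum>p\<in>{..<n}\<times>{..<n}. \<alpha> E F 1 (mat1 ((U - V) (fst p) (snd p))))"
      using os_decomp[OF osA, of "U - V" n] DF by simp
    also have "\<dots> \<le> (\<Sum>p\<in>{..<n}\<times>{..<n}. \<Sum>(x, y)\<leftarrow>xs (fst p) (snd p). snd E 1 (mat1 x) * snd F 1 (mat1 (T y - y)))"
    proof (intro sum_mono)
      fix p assume p: "p \<in> {..<n}\<times>{..<n}"
      then have i: "fst p < n" "snd p < n" by auto
      have "\<alpha> E F 1 (mat1 ((U - V) (fst p) (snd p))) \<le>
         (\<Sum>(x, y)\<leftarrow>map (\<lambda>(x, y). (x, y - T y)) (xs (fst p) (snd p)). snd E 1 (mat1 x) * snd F 1 (mat1 y))"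
        unfolding Dval[OF i] using tn_list[OF ta osE osF Dset[OF i]] .
      also have "\<dots> = (\<Sum>(x, y)\<leftarrow>xs (fst p) (snd p). snd E 1 (mat1 x) * snd F 1 (mat1 (T y - y)))"
      proof -
        have a: "\<forall>y\<in>fst F. T y \<in> fst F" using imgT by blast
        show ?thesis by (rule list_term[OF osF conjunct1[OF xs[OF i]] a])
      qed
      finally show "\<alpha> E F 1 (mat1 ((U - V) (fst p) (snd p))) \<le>
         (\<Sum>(x, y)\<leftarrow>xs (fst p) (snd p). snd E 1 (mat1 x) * snd F 1 (mat1 (T y - y)))" .
    qed
    finally show ?thesis .
  qed
  have "\<alpha> E F n V \<le> c * (C * \<beta> E F n U)"
    using st3 st2 mult_left_mono[OF st1 c0] by linarith
  moreover have "c * (C * \<beta> E F n U) = C * c * \<beta> E F n U" by simp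
  ultimately show ?thesis using st4 st5 by linarith
qed



theorem lemma4p1:
  fixes \<alpha> \<beta> :: "('a::cvec, 'b::cvec) tnorm"
    and E :: "'a opsp" and F :: "'b opsp"
    and c C :: real
  assumes "os_tensor_norm \<alpha>" and "os_tensor_norm \<beta>"
    and "opspace E" and "opspace F"
    and "c \<ge> 1"
    and "\<forall>M. fin_dim M \<and> M \<subseteq> fst F \<longrightarrow>
           (\<exists>N. fin_dim N \<and> M \<subseteq> N \<and> N \<subseteq> fst F \<and> tn_le \<alpha> \<beta> E (restr F N) c)"
    and "C \<ge> 1" and "has_cbap F C"
  shows "tn_le \<alpha> \<beta> E F (C * c)"
proof -
  obtain \<Phi> :: "('b \<Rightarrow> 'b) filter" where \<Phi>: "\<Phi> \<noteq> bot"
    "\<forall>\<^sub>F T in \<Phi>. finite_rank_on (fst F) T \<and> cb_bounded F F T C"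
    "\<forall>x\<in>fst F. ((\<lambda>T. snd F 1 (mat1 (T x - x))) \<longlongrightarrow> 0) \<Phi>"
    using assms(8) unfolding has_cbap_def by blast
  have main: "\<alpha> E F n U \<le> C * c * \<beta> E F n U" if U: "U \<in> matrices n n (tens (fst E) (fst F))" for n U
  proof -
    define xs where "xs = (\<lambda>i j. SOME ws. set ws \<subseteq> fst E \<times> fst F \<and> U i j = tsum ws)"
    have xs: "set (xs i j) \<subseteq> fst E \<times> fst F \<and> U i j = tsum (xs i j)" if "i < n" "j < n" for i j
    proof -
      have "U i j \<in> tens (fst E) (fst F)" using U that unfolding matrices_def by blast
      then have "\<exists>ws. set ws \<subseteq> fst E \<times> fst F \<and> U i j = tsum ws" unfolding tens_def by blast
      then show ?thesis unfolding xs_def by (rule someI_ex)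
    qed
    define \<rho> where "\<rho> = (\<lambda>T. (\<Sum>p\<in>{..<n}\<times>{..<n}. \<Sum>(x, y)\<leftarrow>xs (fst p) (snd p).
        snd E 1 (mat1 x) * snd F 1 (mat1 (T y - y))))"
    have lim: "(\<rho> \<longlongrightarrow> 0) \<Phi>"
      unfolding \<rho>_def
    proof (rule tendsto_null_sum)
      fix p assume p: "p \<in> {..<n}\<times>{..<n}"
      then have i: "fst p < n" "snd p < n" by auto
      show "((\<lambda>T. \<Sum>(x, y)\<leftarrow>xs (fst p) (snd p). snd E 1 (mat1 x) * snd F 1 (mat1 (T y - y))) \<longlongrightarrow> 0) \<Phi>"
      proof (rule tendsto_list)
        fix q assume q: "q \<in> set (xs (fst p) (snd p))"
        obtain x y where qq: "q = (x, y)" by force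
        have "y \<in> fst F" using xs[OF i] q qq by auto
        then have "((\<lambda>T. snd F 1 (mat1 (T y - y))) \<longlongrightarrow> 0) \<Phi>" using \<Phi>(3) by blast
        then have "((\<lambda>T. snd E 1 (mat1 x) * snd F 1 (mat1 (T y - y))) \<longlongrightarrow> 0) \<Phi>"
          by (rule tendsto_mult_right_zero)
        then show "((\<lambda>T. case q of (x, y) \<Rightarrow> snd E 1 (mat1 x) * snd F 1 (mat1 (T y - y))) \<longlongrightarrow> 0) \<Phi>"
          by (simp add: qq)
      qed
    qed
    have ev: "\<forall>\<^sub>F T in \<Phi>. \<alpha> E F n U \<le> C * c * \<beta> E F n U + \<rho> T"
      using \<Phi>(2)
    proof (rule eventually_mono)
      fix T assume T: "finite_rank_on (fst F) T \<and> cb_bounded F F T C"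
      have c0: "0 \<le> c" using assms(5) by simp
      show "\<alpha> E F n U \<le> C * c * \<beta> E F n U + \<rho> T"
        unfolding \<rho>_def
        using key_step[OF assms(1-4) c0 assms(6) U xs, of T C] T by blast
    qed
    show ?thesis
    proof (rule ccontr)
      assume "\<not> ?thesis"
      then have "0 < \<alpha> E F n U - C * c * \<beta> E F n U" by simp
      then have "\<forall>\<^sub>F T in \<Phi>. \<rho> T < \<alpha> E F n U - C * c * \<beta> E F n U"
        using order_tendstoD(2)[OF lim] by blast
      then obtain T where "\<rho> T < \<alpha> E F n U - C * c * \<beta> E F n U"
        "\<alpha> E F n U \<le> C * c * \<beta> E F n U + \<rho> T"
        using eventually_happens'[OF \<Phi>(1) eventually_conj[OF _ ev]] by blast
      then show False by linarith
    qed
  qed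
  show ?thesis
    unfolding tn_le_def cb_bounded_def
  proof (intro conjI allI ballI)
    show "clinear_on (fst (tens (fst E) (fst F), \<beta> E F)) id" by (simp add: clinear_on_def)
    show "id ` fst (tens (fst E) (fst F), \<beta> E F) \<subseteq> fst (tens (fst E) (fst F), \<alpha> E F)" by simp
  next
    fix n X assume "X \<in> matrices n n (fst (tens (fst E) (fst F), \<beta> E F))"
    then have "\<alpha> E F n X \<le> C * c * \<beta> E F n X" using main by simp
    then show "snd (tens (fst E) (fst F), \<alpha> E F) n (\<lambda>i j. id (X i j)) \<le> C * c * snd (tens (fst E) (fst F), \<beta> E F) n X"
      by simp
  qed
qed


end
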